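(* Let $d\in\mathbb{Z}^+$ and $e\in\{1,\dots,d-1\}$. For every $B\in\mathcal{N}_d(\mathbb{R}^2)$, \[ |\mathcal{C}_{d,e}(B)|<2^{2^{d+2}}. \]
   Context: For $k\in\mathbb{Z}^+$, a curve of degree $k$ is the zero set in $\mathbb{R}^2$ of a polynomial in $\mathbb{R}[x,y]$ of degree exactly $k$; $\mathcal{C}_k$ is the family of such curves. For $k\in\mathbb{Z}^+$ let $I_k=\{(i,j)\in\mathbb{Z}_{\ge 0}^2: 1\le i+j\le k\}$ and $\psi_k:\mathbb{R}^2\to\mathbb{R}^{\binom{k+2}{2}-1}$, $\psi_k(a_1,a_2)=(a_1^ia_2^j)_{(i,j)\in I_k}$; $\dim S$ is the dimension of the affine hull of $S$ ($\dim\emptyset=-1$). For $A\subseteq\mathbb{R}^2$, $\mathcal{N}_d(A)$ is the family of $B\subseteq A$ with $|B|=\binom{d+2}{2}-3$ such that: (a) $\dim\psi_d(B)=\binom{d+2}{2}-4$; (b) for all $e\in\{1,\dots,d-1\}$ and $C\in\mathcal{C}_e$, $|B\cap C|<\binom{d+2}{2}-\binom{d-e+2}{2}$; (c) for all $e\in\{1,\dots,d-1\}$ and $C\in\mathcal{C}_e$ with $|B\cap C|=\binom{d+2}{2}-\binom{d-e+2}{2}-1$, $\dim\psi_{d-e}(B\setminus C)=\binom{d-e+2}{2}-3$; (d) for all $e\in\{1,\dots,d-1\}$ and $C\in\mathcal{C}_e$ with $|B\cap C|<\binom{d+2}{2}-\binom{d-e+2}{2}-1$, $\dim\psi_{d-e}(B\setminus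 C)>\binom{d-e+2}{2}-3$. For $B\subseteq\mathbb{R}^2$, $\mathcal{C}_{d,e}(B):=\{C\in\mathcal{C}_e: |C\cap B|=\binom{d+2}{2}-\binom{d-e+2}{2}-1\}$. *)

theory Defs
  imports "HOL-Analysis.Analysis" "HOL-Library.Function_Algebras"
begin

definition peval :: "nat \<Rightarrow> (nat \<Rightarrow> nat \<Rightarrow> real) \<Rightarrow> real \<times> real \<Rightarrow> real" where
  "peval k c p = (\<Sum>i\<le>k. \<Sum>j\<le>k - i. c i j * fst p ^ i * snd p ^ j)"

definition has_degree :: "nat \<Rightarrow> (nat \<Rightarrow> nat \<Rightarrow> real) \<Rightarrow> bool" where
  "has_degree k c \<longleftrightarrow> (\<forall>i j. k < i + j \<longrightarrow> c i j = 0) \<and> (\<exists>i j. i + j = k \<and> c i j \<noteq> 0)"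

definition curves :: "nat \<Rightarrow> (real \<times> real) set set" where
  "curves k = {{p. peval k c p = 0} | c. has_degree k c}"

definition Ik :: "nat \<Rightarrow> (nat \<times> nat) set" where
  "Ik k = {(i, j). 1 \<le> i + j \<and> i + j \<le> k}"

definition psi :: "nat \<Rightarrow> real \<times> real \<Rightarrow> (nat \<times> nat \<Rightarrow> real)" where
  "psi k a = (\<lambda>(i, j). if (i, j) \<in> Ik k then fst a ^ i * snd a ^ j else 0)"

definition affdim :: "(nat \<times> nat \<Rightarrow> real) set \<Rightarrow> int" where
  "affdim S = (if S = {} then -1
     else int (vector_space.dim (\<lambda>r f. \<lambda>x. r * f x) {x - y | x y. x \<in> S \<and> y \<in> S}))"

definition Nd :: "nat \<Rightarrow> (real \<times> real) set \<Rightarrow> (real \<times> real) set set" where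
  "Nd d A = {B. B \<subseteq> A \<and> finite B \<and> card B = (d + 2 choose 2) - 3
     \<and> affdim (psi d ` B) = int (d + 2 choose 2) - 4
     \<and> (\<forall>e \<in> {1..d - 1}. \<forall>C \<in> curves e.
          card (B \<inter> C) < (d + 2 choose 2) - (d - e + 2 choose 2))
     \<and> (\<forall>e \<in> {1..d - 1}. \<forall>C \<in> curves e.
          card (B \<inter> C) = (d + 2 choose 2) - (d - e + 2 choose 2) - 1 \<longrightarrow>
          affdim (psi (d - e) ` (B - C)) = int (d - e + 2 choose 2) - 3)
     \<and> (\<forall>e \<in> {1..d - 1}. \<forall>C \<in> curves e.
          card (B \<inter> C) < (d + 2 choose 2) - (d - e + 2 choose 2) - 1 \<longrightarrow>
          affdim (psi (d - e) ` (B - C)) > int (d - e + 2 choose 2) - 3)}"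

definition Cde :: "nat \<Rightarrow> nat \<Rightarrow> (real \<times> real) set \<Rightarrow> (real \<times> real) set set" where
  "Cde d e B = {C \<in> curves e. card (C \<inter> B) = (d + 2 choose 2) - (d - e + 2 choose 2) - 1}"

end

theory Submission
  imports Defs
begin

lemma peval_Sigma:
  "peval k c p = (\<Sum>(i,j)\<in>{(i,j). i + j \<le> k}. c i j * fst p ^ i * snd p ^ j)"
proof -
  have "peval k c p = (\<Sum>(i,j)\<in>Sigma {..k} (\<lambda>i. {..k-i}). c i j * fst p ^ i * snd p ^ j)"
    unfolding peval_def by (subst sum.Sigma) auto
  also have "Sigma {..k} (\<lambda>i. {..k-i}) = {(i,j). i + j \<le> k}" by auto
  finally show ?thesis .
qed

lemma finite_tri: "finite {(i,j). i + j \<le> (k::nat)}"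
proof -
  have "{(i,j). i + j \<le> k} \<subseteq> {..k} \<times> {..k}" by auto
  then show ?thesis by (rule finite_subset) auto
qed

lemma peval_extend:
  assumes "\<forall>i j. k < i + j \<longrightarrow> c i j = 0" "k \<le> m"
  shows "peval m c p = peval k c p"
proof -
  have "(\<Sum>(i,j)\<in>{(i,j). i + j \<le> k}. c i j * fst p ^ i * snd p ^ j)
      = (\<Sum>(i,j)\<in>{(i,j). i + j \<le> m}. c i j * fst p ^ i * snd p ^ j)"
  proof -
    have nz: "\<And>i j. c i j \<noteq> 0 \<Longrightarrow> i + j \<le> k" using assms(1) leI by blast
    show ?thesis by (rule sum.mono_neutral_left) (use assms(2) nz finite_tri in auto)
  qed
  then show ?thesis by (simp add: peval_Sigma)
qed

lemma peval_lin:
  "peval k (\<lambda>i j. a * c1 i j + b * c2 i j) p = a * peval k c1 p + b * peval k c2 p"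
  unfolding peval_def by (simp add: sum.distrib sum_distrib_left algebra_simps)

lemma peval_scale:
  "peval k (\<lambda>i j. a * c1 i j) p = a * peval k c1 p"
  unfolding peval_def by (simp add: sum_distrib_left algebra_simps)

lemma choose2_mono: "m \<le> n \<Longrightarrow> (m choose 2) \<le> (n choose 2)"
  by (simp add: choose_two div_le_mono mult_le_mono)

lemma inj_lemma:
  fixes d e :: nat and B :: "(real \<times> real) set"
  assumes "1 \<le> e" and "e \<le> d - 1"
    and B: "B \<in> Nd d UNIV"
    and C1: "C1 \<in> Cde d e B" and C2: "C2 \<in> Cde d e B"
    and eq: "C1 \<inter> B = C2 \<inter> B"
  shows "C1 = C2"
proof (rule ccontr)
  assume ne: "C1 \<noteq> C2"
  obtain c1 where c1: "C1 = {p. peval e c1 p = 0}" "has_degree e c1"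
    using C1 unfolding Cde_def curves_def by auto
  obtain c2 where c2: "C2 = {p. peval e c2 p = 0}" "has_degree e c2"
    using C2 unfolding Cde_def curves_def by auto
  define S where "S = C1 \<inter> B"
  have finB: "finite B" and cardB: "card B = (d + 2 choose 2) - 3"
    using B unfolding Nd_def by auto
  have cardS: "card S = (d + 2 choose 2) - (d - e + 2 choose 2) - 1"
    using C1 unfolding Cde_def S_def by (auto simp: Int_commute)
  have "3 \<le> (d - e + 2 choose 2)"
  proof -
    have "(3 choose 2) \<le> (d - e + 2 choose 2)" by (rule choose2_mono) (use assms in auto)
    moreover have "(3::nat) choose 2 = 3" by (simp add: numeral_eq_Suc)
    ultimately show ?thesis by simp
  qed
  moreover have "(d - e + 2 choose 2) \<le> (d + 1 choose 2)" by (rule choose2_mono) (use assms in auto)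
  moreover have "(d+2 choose 2) = (d+1) + (d+1 choose 2)"
    using binomial_Suc_Suc[of "d+1" 1] by (simp add: numeral_2_eq_2)
  ultimately have "card S < card B" using cardS cardB by linarith
  then have "\<not> B \<subseteq> S"
  proof (intro notI)
    assume "card S < card B" "B \<subseteq> S"
    moreover have "card B \<le> card S" by (rule card_mono) (use finB \<open>B \<subseteq> S\<close> S_def in auto)
    ultimately show False by simp
  qed
  then obtain p where pB: "p \<in> B" and pS: "p \<notin> S" by auto
  define a where "a = peval e c2 p"
  define b where "b = - peval e c1 p"
  define h where "h = (\<lambda>i j. a * c1 i j + b * c2 i j)"
  have hval: "peval e h q = a * peval e c1 q + b * peval e c2 q" for q
    unfolding h_def by (rule peval_lin)
  have hp: "peval e h p = 0" unfolding hval a_def b_def by simp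
  have hS: "peval e h q = 0" if "q \<in> S" for q
  proof -
    have "q \<in> C1" "q \<in> C2" using that eq unfolding S_def by auto
    then show ?thesis using c1 c2 hval by simp
  qed
  have hbig: "h i j = 0" if "e < i + j" for i j
    using c1(2) c2(2) that unfolding has_degree_def h_def by simp
  have "\<exists>i j. i + j \<le> e \<and> h i j \<noteq> 0"
  proof (rule ccontr)
    assume "\<not> ?thesis"
    then have h0: "h i j = 0" for i j using hbig by (meson not_le)
    show False
    proof (cases "a = 0")
      case True
      have "b \<noteq> 0"
      proof
        assume "b = 0"
        then have "p \<in> C1" using c1 b_def by simp
        then show False using pS pB S_def by auto
      qed
      then have "c2 i j = 0" for i j using h0[of i j] True unfolding h_def by simp
      then show False using c2(2) unfolding has_degree_def by auto
    next
      case False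
      have c1eq: "c1 = (\<lambda>i j. (- b / a) * c2 i j)"
      proof (intro ext)
        fix i j
        have "a * c1 i j + b * c2 i j = 0" using h0[of i j] unfolding h_def .
        then have "a * c1 i j = - b * c2 i j" by linarith
        then show "c1 i j = (- b / a) * c2 i j" using False by (simp add: field_simps)
      qed
      have "b \<noteq> 0"
      proof
        assume "b = 0"
        then have "c1 i j = 0" for i j using c1eq by simp
        then show False using c1(2) unfolding has_degree_def by auto
      qed
      then have "- b / a \<noteq> 0" using False by simp
      then have "C1 = C2" unfolding c1 c2 c1eq peval_scale by simp
      then show False using ne by simp
    qed
  qed
  define M where "M = {i + j | i j. i + j \<le> e \<and> h i j \<noteq> 0}"
  have finM: "finite M" by (rule finite_subset[of _ "{..e}"]) (auto simp: M_def)
  have Mne: "M \<noteq> {}" using \<open>\<exists>i j. i + j \<le> e \<and> h i j \<noteq> 0\<close> by (auto simp: M_def)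
  define e' where "e' = Max M"
  have e'M: "e' \<in> M" using finM Mne e'_def by simp
  have e'le: "e' \<le> e" using e'M by (auto simp: M_def)
  have hzero: "h i j = 0" if "e' < i + j" for i j
  proof (cases "i + j \<le> e")
    case True
    show ?thesis
    proof (rule ccontr)
      assume "h i j \<noteq> 0"
      then have "i + j \<in> M" using True by (auto simp: M_def)
      then have "i + j \<le> e'" using finM e'_def by simp
      then show False using that by simp
    qed
  qed (use hbig in auto)
  have hdeg: "has_degree e' h"
    unfolding has_degree_def using hzero e'M by (auto simp: M_def)
  have hext: "peval e h q = peval e' h q" for q
    by (rule peval_extend) (use hzero e'le in auto)
  have "e' \<noteq> 0"
  proof
    assume "e' = 0"
    then have "h 0 0 \<noteq> 0" using e'M by (auto simp: M_def)
    moreover have "peval 0 h p = h 0 0" by (simp add: peval_def)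
    ultimately show False using hp hext \<open>e' = 0\<close> by simp
  qed
  define Z where "Z = {q. peval e' h q = 0}"
  have Zc: "Z \<in> curves e'" unfolding curves_def Z_def using hdeg by auto
  have e'range: "e' \<in> {1..d - 1}" using \<open>e' \<noteq> 0\<close> e'le assms by auto
  have lt: "card (B \<inter> Z) < (d + 2 choose 2) - (d - e' + 2 choose 2)"
    using B Zc e'range unfolding Nd_def by blast
  have sub: "insert p S \<subseteq> B \<inter> Z"
    using hS hp hext pB unfolding Z_def S_def by auto
  have finS: "finite S" using finB S_def by simp
  have ci: "card (insert p S) = card S + 1" using finS pS by simp
  have "card (insert p S) \<le> card (B \<inter> Z)" using sub finB by (intro card_mono) auto
  then have ge: "card S + 1 \<le> card (B \<inter> Z)" using ci by simp
  have "(d - e + 2 choose 2) \<le> (d - e' + 2 choose 2)" by (rule choose2_mono) (use e'le in auto)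
  then show False using ge lt cardS by linarith
qed

theorem lemma29:
  fixes d e :: nat and B :: "(real \<times> real) set"
  assumes "0 < d" and "1 \<le> e" and "e \<le> d - 1"
    and "B \<in> Nd d UNIV"
  shows "finite (Cde d e B) \<and> card (Cde d e B) < 2 ^ (2 ^ (d + 2))"
proof -
  have finB: "finite B" and cardB: "card B = (d + 2 choose 2) - 3"
    using assms(4) unfolding Nd_def by auto
  have inj: "inj_on (\<lambda>C. C \<inter> B) (Cde d e B)"
    using inj_lemma[OF assms(2,3,4)] by (auto simp: inj_on_def)
  have img: "(\<lambda>C. C \<inter> B) ` Cde d e B \<subseteq> Pow B" by auto
  have fin: "finite (Cde d e B)"
    using finite_subset[OF img] finB inj finite_imageD by blast
  have "card (Cde d e B) \<le> card (Pow B)"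
    by (rule card_inj_on_le[OF inj img]) (simp add: finB)
  also have "\<dots> = 2 ^ card B" using finB by (simp add: card_Pow)
  also have "\<dots> < 2 ^ (2 ^ (d + 2))"
  proof -
    have "(d + 2 choose 2) \<le> 2 ^ (d + 2)" by (rule binomial_le_pow2)
    then have "card B < 2 ^ (d + 2)" using cardB
      by (metis diff_le_self le_less_trans order.not_eq_order_implies_strict
          zero_less_numeral zero_less_power le_antisym diff_less less_le_trans)
    then show ?thesis by simp
  qed
  finally show ?thesis using fin by simp
qed

end
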